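(* Let $0<\Omega\le1/2$ and $\alpha\in[0,1]$. Let $\mathcal{S}^n_\Omega$ be the set of all subsets of $\{1,\dots,n\}$ of size $\lfloor\Omega n\rfloor$, and let $N_n(\Omega,\alpha)$ be the cardinality of the smallest $\mathcal{S}\subseteq\mathcal{S}^n_\Omega$ such that for every $\mathbf{s}\in\mathcal{S}^n_\Omega$ there is $\mathbf{s}'\in\mathcal{S}$ with $d(\mathbf{s},\mathbf{s}')\le\alpha$. Then $$\lim_{n\to\infty}\tfrac1n\log N_n(\Omega,\alpha)=R(\Omega,\alpha).$$
   Context: $d(\mathbf{s},\mathbf{s}')=1-|\mathbf{s}\cap\mathbf{s}'|/|\mathbf{s}|$. Logarithms are natural. $H(p)=-p\log p-(1-p)\log(1-p)$ is the binary entropy. $R(\Omega,\alpha)=H(\Omega)-\Omega H(\alpha)-(1-\Omega)H\big(\tfrac{\Omega\alpha}{1-\Omega}\big)$ if $\alpha<1-\Omega$, and $R(\Omega,\alpha)=0$ if $\alpha\ge1-\Omega$. *)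

theory Defs
  imports Complex_Main
begin

definition bin_entropy :: "real \<Rightarrow> real" where
  "bin_entropy p = - p * ln p - (1 - p) * ln (1 - p)"

definition rate :: "real \<Rightarrow> real \<Rightarrow> real" where
  "rate \<Omega> \<alpha> = (if \<alpha> < 1 - \<Omega> then
      bin_entropy \<Omega> - \<Omega> * bin_entropy \<alpha> - (1 - \<Omega>) * bin_entropy (\<Omega> * \<alpha> / (1 - \<Omega>))
    else 0)"

definition sdist :: "nat set \<Rightarrow> nat set \<Rightarrow> real" where
  "sdist s s' = 1 - real (card (s \<inter> s')) / real (card s)"

definition slices :: "nat \<Rightarrow> real \<Rightarrow> nat set set" where
  "slices n \<Omega> = {s. s \<subseteq> {1..n} \<and> card s = nat \<lfloor>\<Omega> * real n\<rfloor>}"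

definition covering_number :: "nat \<Rightarrow> real \<Rightarrow> real \<Rightarrow> nat" where
  "covering_number n \<Omega> \<alpha> = (LEAST k. \<exists>S. S \<subseteq> slices n \<Omega> \<and> card S = k \<and>
      (\<forall>s\<in>slices n \<Omega>. \<exists>s'\<in>S. sdist s s' \<le> \<alpha>))"

end

theory Submission
  imports Defs "HOL-Analysis.Analysis"
begin


lemma H_0[simp]: "bin_entropy 0 = 0" and H_1[simp]: "bin_entropy 1 = 0"
  by (simp_all add: bin_entropy_def)

lemma binom_upper:
  assumes "b \<le> a" "0 < a"
  shows "ln (real (a choose b)) \<le> real a * bin_entropy (real b / real a)"
proof (cases "b = 0 \<or> b = a")
  case True then show ?thesis using assms by auto
next
  case False
  define p where "p = real b / real a"
  have p: "0 < p" "p < 1" using False assms by (auto simp: p_def field_simps)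
  have "1 = (p + (1 - p)) ^ a" by simp
  also have "\<dots> = (\<Sum>j\<le>a. real (a choose j) * p ^ j * (1 - p) ^ (a - j))"
    by (rule binomial_ring)
  also have "\<dots> \<ge> real (a choose b) * p ^ b * (1 - p) ^ (a - b)"
    by (rule member_le_sum) (use assms p in auto)
  finally have le: "real (a choose b) * p ^ b * (1 - p) ^ (a - b) \<le> 1" .
  have pos: "real (a choose b) > 0" using assms by simp
  have "ln (real (a choose b) * p ^ b * (1 - p) ^ (a - b)) \<le> 0"
    using le pos p by (intro ln_le_zero_iff[THEN iffD2]) auto
  hence "ln (real (a choose b)) + real b * ln p + real (a - b) * ln (1 - p) \<le> 0"
    using pos p by (simp add: ln_mult ln_realpow)
  moreover have "real a * bin_entropy p = - real b * ln p - real (a - b) * ln (1 - p)"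
    using assms by (simp add: bin_entropy_def p_def of_nat_diff field_simps)
  ultimately show ?thesis by (simp add: p_def)
qed

lemma binom_lower:
  assumes "b \<le> a" "0 < a"
  shows "real a * bin_entropy (real b / real a) - ln (real a + 1) \<le> ln (real (a choose b))"
proof (cases "b = 0 \<or> b = a")
  case True then show ?thesis using assms by auto
next
  case False
  define p where "p = real b / real a"
  have p: "0 < p" "p < 1" using False assms by (auto simp: p_def field_simps)
  define t where "t j = real (a choose j) * p ^ j * (1 - p) ^ (a - j)" for j
  have tnn: "t j \<ge> 0" for j using p by (auto simp: t_def)
  have rec: "t (Suc j) * (real j + 1) * (1 - p) = t j * (real a - real j) * p" if "j < a" for j
  proof -
    have e: "real (a choose Suc j) * (real j + 1) = real (a choose j) * (real a - real j)"
    proof -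
      have "(a - j) * (a choose j) = a * ((a - 1) choose j)" by (rule binomial_absorb_comp)
      moreover have "Suc j * (a choose Suc j) = a * ((a - 1) choose j)"
        using Suc_times_binomial[of j "a - 1"] that by simp
      ultimately have "Suc j * (a choose Suc j) = (a - j) * (a choose j)" by simp
      hence "real (Suc j * (a choose Suc j)) = real ((a - j) * (a choose j))" by simp
      thus ?thesis using that by (simp add: of_nat_diff algebra_simps)
    qed
    have "a - j = Suc (a - Suc j)" using that by simp
    hence pe: "(1 - p) ^ (a - j) = (1 - p) * (1 - p) ^ (a - Suc j)" by simp
    have "t j * (real a - real j) * p
       = (real (a choose j) * (real a - real j)) * p ^ Suc j * (1 - p) ^ (a - Suc j) * (1 - p)"
      unfolding t_def pe power_Suc by (simp only: mult_ac)
    also have "\<dots> = (real (a choose Suc j) * (real j + 1)) * p ^ Suc j * (1 - p) ^ (a - Suc j) * (1 - p)"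
      using e by (simp only: mult_ac)
    also have "\<dots> = t (Suc j) * (real j + 1) * (1 - p)"
      unfolding t_def by (simp only: mult_ac)
    finally show ?thesis by simp
  qed
  have b: "real b = real a * p" using assms by (simp add: p_def)
  have up: "t j \<le> t (Suc j)" if "j < b" for j
  proof -
    have ja: "j < a" using that assms by simp
    have "t j * (real j + 1) * (1 - p) \<le> t j * (real a - real j) * p"
    proof -
      have "(real j + 1) * (1 - p) \<le> (real a - real j) * p"
        using that b p by (simp add: algebra_simps)
      thus ?thesis using tnn[of j] by (metis mult.assoc mult_left_mono)
    qed
    also have "\<dots> = t (Suc j) * (real j + 1) * (1 - p)" using rec[OF ja] by simp
    finally show ?thesis using p by (simp add: mult.assoc)
  qed
  have down: "t (Suc j) \<le> t j" if "b \<le> j" "j < a" for j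
  proof -
    have "t (Suc j) * (real j + 1) * (1 - p) = t j * (real a - real j) * p" using rec[OF that(2)] .
    also have "\<dots> \<le> t j * (real j + 1) * (1 - p)"
    proof -
      have "(real a - real j) * p \<le> (real j + 1) * (1 - p)"
        using that b p by (simp add: algebra_simps)
      thus ?thesis using tnn[of j] by (metis mult.assoc mult_left_mono)
    qed
    finally show ?thesis using p by (simp add: mult.assoc)
  qed
  have le1: "t (b - i) \<le> t b" if "i \<le> b" for i using that
  proof (induction i)
    case (Suc i)
    have "t (b - Suc i) \<le> t (Suc (b - Suc i))" using Suc.prems by (intro up) auto
    also have "Suc (b - Suc i) = b - i" using Suc.prems by simp
    finally show ?case using Suc by simp
  qed simp
  have le2: "t (b + i) \<le> t b" if "b + i \<le> a" for i using that
  proof (induction i)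
    case (Suc i)
    have "t (b + Suc i) \<le> t (b + i)" using Suc.prems by (simp add: down)
    then show ?case using Suc by simp
  qed simp
  have tle: "t j \<le> t b" if "j \<le> a" for j
  proof (cases "j \<le> b")
    case True then show ?thesis using le1[of "b - j"] by simp
  next
    case False then show ?thesis using le2[of "j - b"] that by simp
  qed
  have "1 = (p + (1 - p)) ^ a" by simp
  also have "\<dots> = (\<Sum>j\<le>a. t j)" unfolding t_def by (rule binomial_ring)
  also have "\<dots> \<le> (\<Sum>j\<le>a. t b)" by (rule sum_mono) (use tle in auto)
  also have "\<dots> = (real a + 1) * t b" by simp
  finally have tb: "1 / (real a + 1) \<le> t b" by (simp add: field_simps)
  have tbpos: "t b > 0"
  proof -
    have "0 < 1 / (real a + 1)" by simp
    thus ?thesis using tb by linarith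
  qed
  have "ln (1 / (real a + 1)) \<le> ln (t b)" using tb tbpos by (subst ln_le_cancel_iff) auto
  hence "- ln (real a + 1) \<le> ln (t b)" by (simp add: ln_div)
  moreover have "ln (t b) = ln (real (a choose b)) + real b * ln p + real (a - b) * ln (1 - p)"
    unfolding t_def using p assms by (simp add: ln_mult ln_realpow)
  moreover have "real a * bin_entropy p = - real b * ln p - real (a - b) * ln (1 - p)"
    using assms by (simp add: bin_entropy_def p_def of_nat_diff field_simps)
  ultimately show ?thesis by (simp add: p_def)
qed



lemma count_inter:
  assumes x: "x \<subseteq> {1..n}" "card x = k" and j: "j \<le> k"
  shows "card {s. s \<subseteq> {1..n} \<and> card s = k \<and> card (s \<inter> x) = j}
         = (k choose j) * ((n - k) choose (k - j))"
proof -
  define P where "P = {A. A \<subseteq> x \<and> card A = j}"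
  define Q where "Q = {B. B \<subseteq> {1..n} - x \<and> card B = k - j}"
  have fx: "finite x" using x finite_subset by blast
  have cP: "card P = k choose j" unfolding P_def using n_subsets[OF fx] x by simp
  have cd: "card ({1..n} - x) = n - k" using x fx by (simp add: card_Diff_subset)
  have cQ: "card Q = (n - k) choose (k - j)" unfolding Q_def using n_subsets[of "{1..n} - x"] cd by simp
  have inj: "inj_on (\<lambda>(A, B). A \<union> B) (P \<times> Q)"
  proof (rule inj_onI)
    fix u v assume uv: "u \<in> P \<times> Q" "v \<in> P \<times> Q" "(\<lambda>(A, B). A \<union> B) u = (\<lambda>(A, B). A \<union> B) v"
    obtain A B A' B' where e: "u = (A, B)" "v = (A', B')" by (cases u, cases v) auto
    have h: "A = (A \<union> B) \<inter> x" "A' = (A' \<union> B') \<inter> x" "B = (A \<union> B) - x" "B' = (A' \<union> B') - x"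
      using uv unfolding e P_def Q_def by auto
    have eq: "A \<union> B = A' \<union> B'" using uv(3) unfolding e by simp
    have "A = A'" by (rule trans[OF h(1)], subst eq, rule h(2)[symmetric])
    moreover have "B = B'" by (rule trans[OF h(3)], subst eq, rule h(4)[symmetric])
    ultimately show "u = v" unfolding e by simp
  qed
  have img: "(\<lambda>(A, B). A \<union> B) ` (P \<times> Q) = {s. s \<subseteq> {1..n} \<and> card s = k \<and> card (s \<inter> x) = j}"
  proof
    show "(\<lambda>(A, B). A \<union> B) ` (P \<times> Q) \<subseteq> {s. s \<subseteq> {1..n} \<and> card s = k \<and> card (s \<inter> x) = j}"
    proof clarify
      fix A B assume AB: "A \<in> P" "B \<in> Q"
      have fA: "finite A" "finite B" using AB fx unfolding P_def Q_def
        by (auto intro: finite_subset)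
      have disj: "A \<inter> B = {}" using AB unfolding P_def Q_def by auto
      have "card (A \<union> B) = k" using card_Un_disjoint[OF fA disj] AB j unfolding P_def Q_def by simp
      moreover have "(A \<union> B) \<inter> x = A" using AB unfolding P_def Q_def by auto
      ultimately show "A \<union> B \<subseteq> {1..n} \<and> card (A \<union> B) = k \<and> card ((A \<union> B) \<inter> x) = j"
        using AB x unfolding P_def Q_def by auto
    qed
  next
    show "{s. s \<subseteq> {1..n} \<and> card s = k \<and> card (s \<inter> x) = j} \<subseteq> (\<lambda>(A, B). A \<union> B) ` (P \<times> Q)"
    proof (rule subsetI)
      fix s assume "s \<in> {s. s \<subseteq> {1..n} \<and> card s = k \<and> card (s \<inter> x) = j}"
      hence s: "s \<subseteq> {1..n}" "card s = k" "card (s \<inter> x) = j" by auto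
      have fs: "finite s" using s finite_subset by blast
      have "card (s - x) = card s - card (s \<inter> x)"
        using card_Diff_subset_Int[of s x] fs by simp
      hence "card (s - x) = k - j" using s by simp
      hence "(s \<inter> x, s - x) \<in> P \<times> Q" using s unfolding P_def Q_def by auto
      moreover have "s = (s \<inter> x) \<union> (s - x)" by auto
      ultimately show "s \<in> (\<lambda>(A, B). A \<union> B) ` (P \<times> Q)" by (intro image_eqI[where x="(s \<inter> x, s - x)"]) auto
    qed
  qed
  have "card {s. s \<subseteq> {1..n} \<and> card s = k \<and> card (s \<inter> x) = j} = card (P \<times> Q)"
    using card_image[OF inj] img by simp
  also have "\<dots> = (k choose j) * ((n - k) choose (k - j))" using cP cQ by (simp add: card_cartesian_product)
  finally show ?thesis .
qed

definition kk :: "nat \<Rightarrow> real \<Rightarrow> nat" where "kk n \<Omega> = nat \<lfloor>\<Omega> * real n\<rfloor>"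

definition j0 :: "nat \<Rightarrow> real \<Rightarrow> nat" where "j0 k \<alpha> = nat \<lceil>(1 - \<alpha>) * real k\<rceil>"

definition Vn :: "nat \<Rightarrow> nat \<Rightarrow> real \<Rightarrow> nat" where
  "Vn n k \<alpha> = (\<Sum>j\<in>{j0 k \<alpha>..k}. (k choose j) * ((n - k) choose (k - j)))"

definition ball :: "nat \<Rightarrow> real \<Rightarrow> real \<Rightarrow> nat set \<Rightarrow> nat set set" where
  "ball n \<Omega> \<alpha> x = {s \<in> slices n \<Omega>. sdist s x \<le> \<alpha>}"

lemma finite_slices: "finite (slices n \<Omega>)"
  unfolding slices_def by (rule finite_subset[of _ "Pow {1..n}"]) auto

lemma card_slices: "card (slices n \<Omega>) = n choose kk n \<Omega>"
  unfolding slices_def kk_def using n_subsets[of "{1..n}"] by simp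

lemma sdist_iff:
  assumes "card s = k" "0 < k" "finite s"
  shows "sdist s x \<le> \<alpha> \<longleftrightarrow> j0 k \<alpha> \<le> card (s \<inter> x)"
proof -
  have "sdist s x \<le> \<alpha> \<longleftrightarrow> (1 - \<alpha>) * real k \<le> real (card (s \<inter> x))"
    using assms unfolding sdist_def by (simp add: field_simps)
  also have "\<dots> \<longleftrightarrow> \<lceil>(1 - \<alpha>) * real k\<rceil> \<le> int (card (s \<inter> x))"
    by (simp add: ceiling_le_iff)
  also have "\<dots> \<longleftrightarrow> j0 k \<alpha> \<le> card (s \<inter> x)" unfolding j0_def by linarith
  finally show ?thesis .
qed

lemma card_ball:
  assumes x: "x \<in> slices n \<Omega>" and k: "0 < kk n \<Omega>"
  shows "card (ball n \<Omega> \<alpha> x) = Vn n (kk n \<Omega>) \<alpha>"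
proof -
  let ?k = "kk n \<Omega>"
  define E where "E j = {s. s \<subseteq> {1..n} \<and> card s = ?k \<and> card (s \<inter> x) = j}" for j
  have xs: "x \<subseteq> {1..n}" "card x = ?k" using x unfolding slices_def kk_def by auto
  have "ball n \<Omega> \<alpha> x = (\<Union>j\<in>{j0 ?k \<alpha>..?k}. E j)"
  proof (intro set_eqI iffI)
    fix s assume "s \<in> ball n \<Omega> \<alpha> x"
    hence s: "s \<subseteq> {1..n}" "card s = ?k" "sdist s x \<le> \<alpha>"
      unfolding ball_def slices_def kk_def by auto
    have fs: "finite s" using s finite_subset by blast
    have "card (s \<inter> x) \<le> ?k" using card_mono[OF fs, of "s \<inter> x"] s by auto
    thus "s \<in> (\<Union>j\<in>{j0 ?k \<alpha>..?k}. E j)" using sdist_iff[OF s(2) k fs] s unfolding E_def by auto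
  next
    fix s assume "s \<in> (\<Union>j\<in>{j0 ?k \<alpha>..?k}. E j)"
    then obtain j where j: "j \<in> {j0 ?k \<alpha>..?k}" "s \<subseteq> {1..n}" "card s = ?k" "card (s \<inter> x) = j"
      unfolding E_def by auto
    have fs: "finite s" using j finite_subset by blast
    show "s \<in> ball n \<Omega> \<alpha> x" using sdist_iff[OF j(3) k fs] j
      unfolding ball_def slices_def kk_def by auto
  qed
  hence "card (ball n \<Omega> \<alpha> x) = card (\<Union>j\<in>{j0 ?k \<alpha>..?k}. E j)" by simp
  also have "\<dots> = (\<Sum>j\<in>{j0 ?k \<alpha>..?k}. card (E j))"
    by (rule card_UN_disjoint) (auto simp: E_def intro: finite_subset[of _ "Pow {1..n}"])
  also have "\<dots> = Vn n ?k \<alpha>" unfolding Vn_def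
  proof (rule sum.cong)
    fix j assume "j \<in> {j0 ?k \<alpha>..?k}"
    hence "j \<le> ?k" by simp
    thus "card (E j) = (?k choose j) * ((n - ?k) choose (?k - j))"
      unfolding E_def by (rule count_inter[OF xs])
  qed simp
  finally show ?thesis .
qed



lemma cover_lower:
  fixes X :: "'a set" and near :: "'a \<Rightarrow> 'a \<Rightarrow> bool"
  assumes fX: "finite X" and cV: "\<forall>s\<in>X. card {c\<in>X. near s c} = V"
    and sym: "\<forall>s\<in>X. \<forall>c\<in>X. near s c \<longleftrightarrow> near c s"
    and S: "S \<subseteq> X" "\<forall>s\<in>X. \<exists>c\<in>S. near s c"
  shows "card X \<le> card S * V"
proof -
  have fS: "finite S" using S fX finite_subset by blast
  have "X \<subseteq> (\<Union>c\<in>S. {s\<in>X. near s c})" using S by blast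
  hence "card X \<le> card (\<Union>c\<in>S. {s\<in>X. near s c})"
    by (intro card_mono) (use fS fX in auto)
  also have "\<dots> \<le> (\<Sum>c\<in>S. card {s\<in>X. near s c})" by (rule card_UN_le[OF fS])
  also have "\<dots> = (\<Sum>c\<in>S. V)"
  proof (rule sum.cong)
    fix c assume c: "c \<in> S"
    hence "{s\<in>X. near s c} = {s\<in>X. near c s}" using sym S by auto
    thus "card {s\<in>X. near s c} = V" using cV c S by auto
  qed simp
  finally show ?thesis by simp
qed

lemma cover_upper:
  fixes X :: "'a set" and near :: "'a \<Rightarrow> 'a \<Rightarrow> bool"
  assumes fX: "finite X" and cV: "\<forall>s\<in>X. card {c\<in>X. near s c} = V"
    and m: "card X * (card X - V) ^ m < card X ^ m"
  shows "\<exists>S. S \<subseteq> X \<and> card S \<le> m \<and> (\<forall>s\<in>X. \<exists>c\<in>S. near s c)"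
proof -
  define T where "T = PiE {..<m} (\<lambda>_. X)"
  define Bad where "Bad s = PiE {..<m} (\<lambda>_. {c\<in>X. \<not> near s c})" for s
  have cT: "card T = card X ^ m" unfolding T_def by (simp add: card_PiE)
  have cB: "card (Bad s) = (card X - V) ^ m" if "s \<in> X" for s
  proof -
    have "{c\<in>X. \<not> near s c} = X - {c\<in>X. near s c}" by auto
    hence "card {c\<in>X. \<not> near s c} = card X - V"
      using cV that fX by (simp add: card_Diff_subset)
    thus ?thesis unfolding Bad_def by (simp add: card_PiE)
  qed
  have "card (\<Union>s\<in>X. Bad s) \<le> (\<Sum>s\<in>X. card (Bad s))" by (rule card_UN_le[OF fX])
  also have "\<dots> = card X * (card X - V) ^ m" using cB by simp
  finally have "card (\<Union>s\<in>X. Bad s) < card T" using m cT by simp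
  moreover have "finite (\<Union>s\<in>X. Bad s)" unfolding Bad_def
    using fX by (intro finite_UN_I fX finite_PiE) auto
  ultimately have "\<not> T \<subseteq> (\<Union>s\<in>X. Bad s)"
    using card_mono[of "\<Union>s\<in>X. Bad s" T] by linarith
  then obtain f where f: "f \<in> T" "f \<notin> (\<Union>s\<in>X. Bad s)" by blast
  have "f ` {..<m} \<subseteq> X" using f(1) unfolding T_def by auto
  moreover have "card (f ` {..<m}) \<le> m" using card_image_le[of "{..<m}" f] by simp
  moreover have "\<forall>s\<in>X. \<exists>c\<in>f ` {..<m}. near s c"
  proof
    fix s assume s: "s \<in> X"
    hence "f \<notin> Bad s" using f by blast
    then obtain i where "i < m" "f i \<notin> {c\<in>X. \<not> near s c}"
      using f(1) unfolding T_def Bad_def PiE_iff by auto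
    moreover have "f i \<in> X" using f(1) \<open>i < m\<close> unfolding T_def by auto
    ultimately show "\<exists>c\<in>f ` {..<m}. near s c" by auto
  qed
  ultimately show ?thesis by blast
qed



lemma binom_step: "j < a \<Longrightarrow> (a choose Suc j) * Suc j = (a choose j) * (a - j)"
proof -
  assume j: "j < a"
  have "(a - j) * (a choose j) = a * ((a - 1) choose j)" by (rule binomial_absorb_comp)
  moreover have "Suc j * (a choose Suc j) = a * ((a - 1) choose j)"
    using Suc_times_binomial[of j "a - 1"] j by simp
  ultimately show ?thesis by (simp add: mult.commute)
qed

lemma binom_step2: "0 < r \<Longrightarrow> (M choose (r - 1)) * (M - (r - 1)) = (M choose r) * r"
proof (cases "r - 1 < M")
  case True
  assume r: "0 < r"
  show ?thesis using binom_step[OF True] r by simp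
next
  case False
  assume r: "0 < r"
  hence "M < r" using False by simp
  thus ?thesis using False by simp
qed

definition TT :: "nat \<Rightarrow> nat \<Rightarrow> nat \<Rightarrow> nat" where
  "TT n k j = (k choose j) * ((n - k) choose (k - j))"

lemma TT_dec:
  assumes kn: "real k \<le> (1 - \<alpha>) * real n" and a: "0 \<le> \<alpha>" and j: "j0 k \<alpha> \<le> j" "j < k"
  shows "TT n k (Suc j) \<le> TT n k j"
proof -
  define r where "r = k - j"
  define M where "M = n - k"
  have r0: "0 < r" using j by (simp add: r_def)
  have "0 \<le> \<alpha> * real n" using a by simp
  hence "(1 - \<alpha>) * real n \<le> real n" by (simp add: algebra_simps)
  hence kn': "k \<le> n" using kn by linarith
  have rj: "k - Suc j = r - 1" by (simp add: r_def)
  have id: "TT n k (Suc j) * (Suc j * (M - (r - 1))) = TT n k j * (r * r)"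
  proof -
    have "TT n k (Suc j) * (Suc j * (M - (r - 1)))
        = ((k choose Suc j) * Suc j) * ((M choose (r - 1)) * (M - (r - 1)))"
      unfolding TT_def M_def rj by (simp only: mult_ac)
    also have "\<dots> = ((k choose j) * r) * ((M choose r) * r)"
      using binom_step[OF j(2)] binom_step2[OF r0] by (simp add: r_def)
    also have "\<dots> = TT n k j * (r * r)" unfolding TT_def M_def r_def by (simp only: mult_ac)
    finally show ?thesis .
  qed
  have jceil: "(1 - \<alpha>) * real k \<le> real j"
    using j(1) unfolding j0_def by linarith
  have rle: "real r \<le> \<alpha> * real k" using jceil j by (simp add: r_def of_nat_diff algebra_simps)
  have rM: "r \<le> M"
  proof -
    have "\<alpha> * real n \<le> real n - real k" using kn by (simp add: algebra_simps)
    moreover have "\<alpha> * real k \<le> \<alpha> * real n" using kn' a by (simp add: mult_left_mono)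
    ultimately have "real r \<le> real M" using rle kn' by (simp add: M_def of_nat_diff)
    thus ?thesis by simp
  qed
  have key: "r * r \<le> Suc j * (M - (r - 1))"
  proof -
    have "real (r * r) \<le> real (Suc j * (M - (r - 1)))"
    proof -
      have e1: "real (Suc j) = real k - real r + 1" using j by (simp add: r_def of_nat_diff)
      have e2: "real (M - (r - 1)) = real M - real r + 1" using rM r0 by (simp add: of_nat_diff)
      have eM: "real M = real n - real k" using kn' by (simp add: M_def of_nat_diff)
      have eN: "real n = real k + real M" using eM by simp
      have rk: "real r \<le> real k" using j by (simp add: r_def)
      have "real r * real n \<le> real k * real M"
      proof -
        have "real r * real n \<le> \<alpha> * real k * real n" using rle by (simp add: mult_right_mono)
        also have "\<dots> = real k * (\<alpha> * real n)" by simp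
        also have "\<dots> \<le> real k * real M" using kn eM by (intro mult_left_mono) (auto simp: algebra_simps)
        finally show ?thesis .
      qed
      moreover have "(real k - real r) * (real M - real r) \<ge> 0"
        using rk rM by (intro mult_nonneg_nonneg) auto
      moreover have "(real k - real r + 1) * (real M - real r + 1)
          = real r * real r + (real k * real M - real r * real n) + (real k - real r) + (real M - real r) + 1"
        unfolding eN by (simp add: algebra_simps)
      ultimately have "real r * real r \<le> (real k - real r + 1) * (real M - real r + 1)"
        using rk rM by linarith
      thus ?thesis unfolding of_nat_mult e1 e2 .
    qed
    thus ?thesis by linarith
  qed
  have "TT n k (Suc j) * (r * r) \<le> TT n k (Suc j) * (Suc j * (M - (r - 1)))"
    using key by simp
  also have "\<dots> = TT n k j * (r * r)" by (rule id)
  finally show ?thesis using r0 by simp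
qed

lemma TT_le_j0:
  assumes kn: "real k \<le> (1 - \<alpha>) * real n" and a: "0 \<le> \<alpha>" and j: "j0 k \<alpha> \<le> j" "j \<le> k"
  shows "TT n k j \<le> TT n k (j0 k \<alpha>)"
proof -
  have "TT n k (j0 k \<alpha> + i) \<le> TT n k (j0 k \<alpha>)" if "j0 k \<alpha> + i \<le> k" for i
    using that
  proof (induction i)
    case (Suc i)
    have "TT n k (Suc (j0 k \<alpha> + i)) \<le> TT n k (j0 k \<alpha> + i)"
      using Suc.prems by (intro TT_dec[OF kn a]) auto
    thus ?case using Suc by simp
  qed simp
  from this[of "j - j0 k \<alpha>"] show ?thesis using j by simp
qed

lemma j0_le: "0 \<le> \<alpha> \<Longrightarrow> j0 k \<alpha> \<le> k"
proof -
  assume a: "0 \<le> \<alpha>"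
  have "0 \<le> \<alpha> * real k" using a by simp
  hence "(1 - \<alpha>) * real k \<le> real k" by (simp add: algebra_simps)
  thus ?thesis unfolding j0_def by (simp add: ceiling_le_iff)
qed

lemma Vn_bounds:
  assumes kn: "real k \<le> (1 - \<alpha>) * real n" and a: "0 \<le> \<alpha>"
  shows "TT n k (j0 k \<alpha>) \<le> Vn n k \<alpha>" "Vn n k \<alpha> \<le> (k + 1) * TT n k (j0 k \<alpha>)"
proof -
  have V: "Vn n k \<alpha> = (\<Sum>j\<in>{j0 k \<alpha>..k}. TT n k j)" unfolding Vn_def TT_def by simp
  show "TT n k (j0 k \<alpha>) \<le> Vn n k \<alpha>" unfolding V
    by (rule member_le_sum) (use j0_le[OF a] in auto)
  have "(\<Sum>j\<in>{j0 k \<alpha>..k}. TT n k j) \<le> (\<Sum>j\<in>{j0 k \<alpha>..k}. TT n k (j0 k \<alpha>))"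
    by (rule sum_mono) (use TT_le_j0[OF kn a] in auto)
  also have "\<dots> = (Suc k - j0 k \<alpha>) * TT n k (j0 k \<alpha>)" by simp
  also have "\<dots> \<le> (k + 1) * TT n k (j0 k \<alpha>)" by (intro mult_le_mono1) simp
  finally show "Vn n k \<alpha> \<le> (k + 1) * TT n k (j0 k \<alpha>)" unfolding V .
qed

lemma Vn_le_binom: "Vn n k \<alpha> \<le> n choose k" if "k \<le> n"
proof -
  have "Vn n k \<alpha> \<le> (\<Sum>j\<le>k. (k choose j) * ((n - k) choose (k - j)))"
    unfolding Vn_def by (rule sum_mono2) auto
  also have "\<dots> = n choose k" using vandermonde[of k "n - k" k] that by simp
  finally show ?thesis .
qed

lemma Vn_mono: "\<alpha>' \<le> \<alpha> \<Longrightarrow> Vn n k \<alpha>' \<le> Vn n k \<alpha>"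
proof -
  assume a: "\<alpha>' \<le> \<alpha>"
  have "j0 k \<alpha> \<le> j0 k \<alpha>'" unfolding j0_def
    by (intro nat_mono ceiling_mono mult_right_mono) (use a in auto)
  thus ?thesis unfolding Vn_def by (intro sum_mono2) auto
qed

lemma Vn_pos: "0 \<le> \<alpha> \<Longrightarrow> k \<le> n \<Longrightarrow> 1 \<le> Vn n k \<alpha>"
proof -
  assume a: "0 \<le> \<alpha>" and kn: "k \<le> n"
  have "1 \<le> (k choose k) * ((n - k) choose (k - k))" by simp
  also have "\<dots> \<le> Vn n k \<alpha>" unfolding Vn_def by (rule member_le_sum) (use j0_le[OF a] in auto)
  finally show ?thesis .
qed



lemma xlnx_0: "((\<lambda>x::real. x * ln x) \<longlongrightarrow> 0) (at_right 0)"
proof -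
  have "((\<lambda>x::real. ln (inverse x) / inverse x) \<longlongrightarrow> 0) (at_right 0)"
    by (rule filterlim_compose[OF ln_x_over_x_tendsto_0 filterlim_inverse_at_top_right])
  hence t: "((\<lambda>x::real. - (ln (inverse x) / inverse x)) \<longlongrightarrow> 0) (at_right 0)"
    using tendsto_minus by fastforce
  have ev: "\<forall>\<^sub>F x in at_right 0. - (ln (inverse x) / inverse x) = x * ln (x::real)"
    using eventually_at_right_less[of "0::real"]
    by eventually_elim (simp add: ln_div field_simps)
  from t show ?thesis by (rule tendsto_cong[OF ev, THEN iffD1])
qed

lemma xlnx_cont: "continuous_on {0..1} (\<lambda>x::real. x * ln x)"
proof (subst continuous_on_eq_continuous_within, intro ballI)
  fix x :: real assume x: "x \<in> {0..1}"
  show "continuous (at x within {0..1}) (\<lambda>x. x * ln x)"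
  proof (cases "x = 0")
    case True
    show ?thesis unfolding True continuous_within at_within_Icc_at_right[OF zero_less_one]
      using xlnx_0 by simp
  next
    case False
    hence "0 < x" using x by simp
    hence "isCont (\<lambda>x. x * ln x) x" by (intro continuous_intros) auto
    thus ?thesis using continuous_at_imp_continuous_at_within by blast
  qed
qed

lemma H_cont: "continuous_on {0..1} bin_entropy"
proof -
  have c2: "continuous_on {0..1} (\<lambda>x::real. (1 - x) * ln (1 - x))"
  proof -
    have "continuous_on {0..1} (\<lambda>x::real. 1 - x)" by (intro continuous_intros)
    thus ?thesis by (rule continuous_on_compose2[OF xlnx_cont]) auto
  qed
  have eq: "(\<lambda>x::real. - (x * ln x) - (1 - x) * ln (1 - x)) = bin_entropy"
    by (auto simp: bin_entropy_def fun_eq_iff)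
  show ?thesis unfolding eq[symmetric] by (rule continuous_on_diff[OF continuous_on_minus[OF xlnx_cont] c2])
qed

lemma H_tendsto:
  assumes "(f \<longlongrightarrow> c) F" "c \<in> {0..1}" "eventually (\<lambda>x. f x \<in> {0..1}) F"
  shows "((\<lambda>x. bin_entropy (f x)) \<longlongrightarrow> bin_entropy c) F"
  using continuous_on_tendsto_compose[OF H_cont assms] by simp

lemma ln_Suc_over_n: "(\<lambda>n. ln (real n + 1) / real n) \<longlonglongrightarrow> 0"
proof -
  have a: "(\<lambda>n. ln (real n) / real n) \<longlonglongrightarrow> 0" by (rule lim_ln_over_n)
  have b: "(\<lambda>n. ln 2 / real n) \<longlonglongrightarrow> 0" by (intro tendsto_divide_0[OF tendsto_const] filterlim_at_top_imp_at_infinity[OF filterlim_real_sequentially])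
  have h: "(\<lambda>n. ln 2 / real n + ln (real n) / real n) \<longlonglongrightarrow> 0" using tendsto_add[OF b a] by simp
  have e1: "eventually (\<lambda>n. 0 \<le> ln (real n + 1) / real n) sequentially" by simp
  have e2: "eventually (\<lambda>n. ln (real n + 1) / real n \<le> ln 2 / real n + ln (real n) / real n) sequentially"
    using eventually_ge_at_top[of "1::nat"]
  proof eventually_elim
    case (elim n)
    hence n: "real n \<ge> 1" by simp
    have "ln (real n + 1) \<le> ln (2 * real n)" using n by simp
    also have "\<dots> = ln 2 + ln (real n)" using n by (simp add: ln_mult)
    finally show ?case using n by (simp add: add_divide_distrib[symmetric] divide_right_mono)
  qed
  show ?thesis by (rule tendsto_sandwich[OF e1 e2 tendsto_const h])
qed

lemma lim_div_n:
  fixes x :: "nat \<Rightarrow> real"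
  assumes "eventually (\<lambda>n. \<bar>x n - c * real n\<bar> \<le> C) sequentially"
  shows "(\<lambda>n. x n / real n) \<longlonglongrightarrow> c"
proof -
  have z: "(\<lambda>n. C / real n) \<longlonglongrightarrow> 0" by (intro tendsto_divide_0[OF tendsto_const] filterlim_at_top_imp_at_infinity[OF filterlim_real_sequentially])
  have l: "(\<lambda>n. c - C / real n) \<longlonglongrightarrow> c" using tendsto_diff[OF tendsto_const z] by simp
  have u: "(\<lambda>n. c + C / real n) \<longlonglongrightarrow> c" using tendsto_add[OF tendsto_const z] by simp
  have ev: "eventually (\<lambda>n. c - C / real n \<le> x n / real n \<and> x n / real n \<le> c + C / real n) sequentially"
    using assms eventually_ge_at_top[of "1::nat"]
  proof eventually_elim
    case (elim n)
    hence n: "real n > 0" by simp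
    have h: "c * real n - C \<le> x n" "x n \<le> c * real n + C" using elim by auto
    have e1: "c - C / real n = (c * real n - C) / real n" using n by (simp add: field_simps)
    have e2: "c + C / real n = (c * real n + C) / real n" using n by (simp add: field_simps)
    show ?case unfolding e1 e2 using h n by (auto intro: divide_right_mono)
  qed
  have e1: "eventually (\<lambda>n. c - C / real n \<le> x n / real n) sequentially"
    by (rule eventually_mono[OF ev]) simp
  have e2: "eventually (\<lambda>n. x n / real n \<le> c + C / real n) sequentially"
    by (rule eventually_mono[OF ev]) simp
  show ?thesis by (rule tendsto_sandwich[OF e1 e2 l u])
qed

lemma ratio_01: "b \<le> a \<Longrightarrow> real b / real a \<in> {0..1}"
  by (cases "a = 0") (auto simp: divide_le_eq_1)

lemma binom_lim:
  fixes a b :: "nat \<Rightarrow> nat"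
  assumes a: "(\<lambda>n. real (a n) / real n) \<longlonglongrightarrow> A" and b: "(\<lambda>n. real (b n) / real n) \<longlonglongrightarrow> B"
    and A: "0 < A" and B: "0 \<le> B" "B \<le> A"
    and ev: "eventually (\<lambda>n. b n \<le> a n \<and> a n \<le> n) sequentially"
  shows "(\<lambda>n. ln (real (a n choose b n)) / real n) \<longlonglongrightarrow> A * bin_entropy (B / A)"
proof -
  define u where "u n = real (a n) * bin_entropy (real (b n) / real (a n)) / real n" for n
  have apos: "eventually (\<lambda>n. A / 2 < real (a n) / real n) sequentially"
    using order_tendstoD(1)[OF a, of "A / 2"] A by simp
  have rat: "(\<lambda>n. (real (b n) / real n) / (real (a n) / real n)) \<longlonglongrightarrow> B / A"
    using tendsto_divide[OF b a] A by simp
  have "eventually (\<lambda>n. (real (b n) / real n) / (real (a n) / real n) \<in> {0..1}) sequentially"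
    using ev eventually_ge_at_top[of "1::nat"]
  proof eventually_elim
    case (elim n)
    hence "(real (b n) / real n) / (real (a n) / real n) = real (b n) / real (a n)" by simp
    thus ?case using ratio_01[of "b n" "a n"] elim by simp
  qed
  moreover have "B / A \<in> {0..1}" using A B by (simp add: divide_le_eq_1)
  ultimately have Hl: "(\<lambda>n. bin_entropy ((real (b n) / real n) / (real (a n) / real n))) \<longlonglongrightarrow> bin_entropy (B / A)"
    using H_tendsto[OF rat] by simp
  have ul: "u \<longlonglongrightarrow> A * bin_entropy (B / A)"
  proof -
    have t: "(\<lambda>n. (real (a n) / real n) * bin_entropy ((real (b n) / real n) / (real (a n) / real n)))
          \<longlonglongrightarrow> A * bin_entropy (B / A)" by (rule tendsto_mult[OF a Hl])
    have ev: "eventually (\<lambda>n. (real (a n) / real n) * bin_entropy ((real (b n) / real n) / (real (a n) / real n)) = u n) sequentially"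
      using eventually_ge_at_top[of "1::nat"] by eventually_elim (simp add: u_def)
    from t show ?thesis by (rule tendsto_cong[OF ev, THEN iffD1])
  qed
  have ll: "(\<lambda>n. u n - ln (real n + 1) / real n) \<longlonglongrightarrow> A * bin_entropy (B / A)"
    using tendsto_diff[OF ul ln_Suc_over_n] by simp
  have sand: "eventually (\<lambda>n. u n - ln (real n + 1) / real n \<le> ln (real (a n choose b n)) / real n
              \<and> ln (real (a n choose b n)) / real n \<le> u n) sequentially"
    using ev apos eventually_ge_at_top[of "1::nat"]
  proof eventually_elim
    case (elim n)
    hence n: "real n > 0" and ab: "b n \<le> a n" "a n \<le> n" by auto
    have "0 < real (a n) / real n" using elim A by linarith
    hence a0: "0 < a n" using n by (simp add: zero_less_divide_iff)
    have up: "ln (real (a n choose b n)) \<le> real (a n) * bin_entropy (real (b n) / real (a n))"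
      by (rule binom_upper[OF ab(1) a0])
    have lo: "real (a n) * bin_entropy (real (b n) / real (a n)) - ln (real (a n) + 1) \<le> ln (real (a n choose b n))"
      by (rule binom_lower[OF ab(1) a0])
    have "ln (real (a n) + 1) \<le> ln (real n + 1)" using ab by simp
    hence "real (a n) * bin_entropy (real (b n) / real (a n)) - ln (real n + 1) \<le> ln (real (a n choose b n))"
      using lo by linarith
    thus ?case using up n unfolding u_def by (simp add: divide_right_mono diff_divide_distrib[symmetric])
  qed
  have e1: "eventually (\<lambda>n. u n - ln (real n + 1) / real n \<le> ln (real (a n choose b n)) / real n) sequentially"
    by (rule eventually_mono[OF sand]) simp
  have e2: "eventually (\<lambda>n. ln (real (a n choose b n)) / real n \<le> u n) sequentially"
    by (rule eventually_mono[OF sand]) simp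
  show ?thesis by (rule tendsto_sandwich[OF e1 e2 ll ul])
qed



lemma kk_le: "0 < \<Omega> \<Longrightarrow> \<Omega> \<le> 1/2 \<Longrightarrow> kk n \<Omega> \<le> n"
proof -
  assume o: "0 < \<Omega>" "\<Omega> \<le> 1/2"
  have "\<Omega> * real n \<le> real n" using o by (simp add: mult_left_le_one_le)
  hence "\<lfloor>\<Omega> * real n\<rfloor> \<le> int n" by linarith
  thus ?thesis unfolding kk_def by simp
qed

lemma cov_bounds:
  assumes o: "0 < \<Omega>" "\<Omega> \<le> 1/2" and a: "0 \<le> \<alpha>" and k: "0 < kk n \<Omega>"
  shows "ln (real (n choose kk n \<Omega>)) - ln (real (Vn n (kk n \<Omega>) \<alpha>)) \<le> ln (real (covering_number n \<Omega> \<alpha>))"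
    and "ln (real (covering_number n \<Omega> \<alpha>)) \<le> ln (real (n choose kk n \<Omega>)) - ln (real (Vn n (kk n \<Omega>) \<alpha>)) + ln (real n + 1)"
proof -
  define K where "K = kk n \<Omega>"
  define N where "N = n choose K"
  define V where "V = Vn n K \<alpha>"
  define X where "X = slices n \<Omega>"
  define c where "c = covering_number n \<Omega> \<alpha>"
  have kn: "K \<le> n" unfolding K_def by (rule kk_le[OF o])
  have fX: "finite X" unfolding X_def by (rule finite_slices)
  have cX: "card X = N" unfolding X_def N_def K_def by (rule card_slices)
  have mem: "finite s \<and> card s = K" if "s \<in> X" for s
    using that unfolding X_def slices_def K_def kk_def by (auto intro: finite_subset)
  have sym: "sdist s t = sdist t s" if "s \<in> X" "t \<in> X" for s t
    using mem[OF that(1)] mem[OF that(2)] unfolding sdist_def by (simp add: Int_commute)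
  have cV: "\<forall>s\<in>X. card {t\<in>X. sdist s t \<le> \<alpha>} = V"
  proof
    fix s assume s: "s \<in> X"
    have "{t\<in>X. sdist s t \<le> \<alpha>} = ball n \<Omega> \<alpha> s" unfolding ball_def X_def[symmetric]
      using sym s by auto
    thus "card {t\<in>X. sdist s t \<le> \<alpha>} = V" unfolding V_def K_def
      using card_ball[of s n \<Omega> \<alpha>] s k unfolding X_def by simp
  qed
  have V1: "1 \<le> V" unfolding V_def by (rule Vn_pos[OF a kn])
  have VN: "V \<le> N" unfolding V_def N_def by (rule Vn_le_binom[OF kn])
  have N1: "1 \<le> N" unfolding N_def using kn by (simp add: Suc_leI)
  define P where "P k' = (\<exists>S. S \<subseteq> slices n \<Omega> \<and> card S = k' \<and> (\<forall>s\<in>slices n \<Omega>. \<exists>s'\<in>S. sdist s s' \<le> \<alpha>))" for k'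
  have cdef: "c = (LEAST k'. P k')" unfolding c_def covering_number_def P_def ..
  have PX: "P (card X)" unfolding P_def
  proof (intro exI[of _ X] conjI)
    show "\<forall>s\<in>slices n \<Omega>. \<exists>s'\<in>X. sdist s s' \<le> \<alpha>"
    proof
      fix s assume s: "s \<in> slices n \<Omega>"
      have "sdist s s = 0" using mem[of s] s k unfolding X_def sdist_def K_def by simp
      thus "\<exists>s'\<in>X. sdist s s' \<le> \<alpha>" using s a X_def by (intro bexI[of _ s]) auto
    qed
  qed (auto simp: X_def)
  have Pc: "P c" unfolding cdef by (rule LeastI[of P, OF PX])
  then obtain S0 where S0: "S0 \<subseteq> X" "card S0 = c" "\<forall>s\<in>X. \<exists>s'\<in>S0. sdist s s' \<le> \<alpha>"
    unfolding P_def X_def by auto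
  have "N \<le> c * V"
    using cover_lower[OF fX cV, of S0] S0 sym cX by auto
  hence lowR: "real N \<le> real c * real V" by (metis of_nat_le_iff of_nat_mult)
  have Vpos: "real V > 0" using V1 by simp
  have Npos: "real N > 0" using N1 by simp
  have cpos: "real c > 0"
  proof (rule ccontr)
    assume "\<not> real c > 0"
    hence "c = 0" by simp
    thus False using lowR Npos by simp
  qed
  have "ln (real N) \<le> ln (real c * real V)" using lowR Npos by simp
  also have "\<dots> = ln (real c) + ln (real V)" using cpos Vpos by (simp add: ln_mult)
  finally show "ln (real (n choose kk n \<Omega>)) - ln (real (Vn n (kk n \<Omega>) \<alpha>)) \<le> ln (real (covering_number n \<Omega> \<alpha>))"
    unfolding N_def V_def K_def c_def by simp
  define x where "x = real N * ln (real N) / real V"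
  have x0: "0 \<le> x" unfolding x_def using N1 Vpos by simp
  define m where "m = nat \<lfloor>x\<rfloor> + 1"
  have mx: "x < real m" unfolding m_def using x0 by linarith
  have mx2: "real m \<le> x + 1" unfolding m_def using x0 by linarith
  have ineq: "N * (N - V) ^ m < N ^ m"
  proof -
    define q where "q = real V / real N"
    have q: "0 < q" "q \<le> 1" unfolding q_def using Vpos Npos VN by auto
    have "real (N - V) = real N * (1 - q)" unfolding q_def using VN Npos by (simp add: of_nat_diff field_simps)
    hence "real ((N - V) ^ m) = real N ^ m * (1 - q) ^ m" by (simp add: power_mult_distrib)
    also have "\<dots> \<le> real N ^ m * exp (- q) ^ m"
    proof -
      have "1 - q \<le> exp (- q)" using exp_ge_add_one_self[of "- q"] by simp
      hence "(1 - q) ^ m \<le> exp (- q) ^ m" using q by (intro power_mono) auto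
      thus ?thesis by (simp add: mult_left_mono)
    qed
    also have "exp (- q) ^ m = exp (- (q * real m))" by (simp add: exp_of_nat_mult[symmetric] mult.commute)
    finally have A: "real ((N - V) ^ m) \<le> real N ^ m * exp (- (q * real m))" .
    have "ln (real N) < q * real m"
    proof -
      have "ln (real N) = q * x" unfolding q_def x_def using Vpos Npos by (simp add: field_simps)
      also have "\<dots> < q * real m" using mx q by simp
      finally show ?thesis .
    qed
    hence "exp (- (q * real m)) < exp (- ln (real N))" by simp
    also have "\<dots> = 1 / real N" using Npos by (simp add: exp_minus inverse_eq_divide)
    finally have B: "real N * exp (- (q * real m)) < 1" using Npos by (simp add: field_simps)
    have "real (N * (N - V) ^ m) \<le> real N * (real N ^ m * exp (- (q * real m)))"
      using A Npos by (simp add: mult_left_mono)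
    also have "\<dots> = real N ^ m * (real N * exp (- (q * real m)))" by simp
    also have "\<dots> < real N ^ m * 1" using B Npos by (intro mult_strict_left_mono) auto
    finally have "real (N * (N - V) ^ m) < real (N ^ m)" by simp
    thus ?thesis by linarith
  qed
  obtain S where S: "S \<subseteq> X" "card S \<le> m" "\<forall>s\<in>X. \<exists>c\<in>S. sdist s c \<le> \<alpha>"
    using cover_upper[OF fX cV, of m] ineq cX by auto
  have "P (card S)" unfolding P_def using S unfolding X_def by auto
  hence "c \<le> card S" unfolding cdef by (rule Least_le)
  hence cm: "real c \<le> real m" using S by simp
  have "real m \<le> real N / real V * (ln (real N) + 1)"
  proof -
    have "1 \<le> real N / real V" using VN Vpos by simp
    moreover have "real N / real V * (ln (real N) + 1) = x + real N / real V"
      unfolding x_def using Vpos by (simp add: field_simps)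
    ultimately show ?thesis using mx2 by linarith
  qed
  hence cR: "real c \<le> real N / real V * (ln (real N) + 1)" using cm by linarith
  hence "ln (real c) \<le> ln (real N / real V * (ln (real N) + 1))"
    using cpos by (subst ln_le_cancel_iff) auto
  also have "\<dots> = ln (real N) - ln (real V) + ln (ln (real N) + 1)"
  proof -
    have "0 \<le> ln (real N)" using N1 by simp
    hence "0 < ln (real N) + 1" by linarith
    thus ?thesis using Npos Vpos by (simp add: ln_mult ln_div)
  qed
  also have "ln (ln (real N) + 1) \<le> ln (real n + 1)"
  proof -
    have "real N \<le> 2 ^ n" unfolding N_def using binomial_le_pow2[of n K] by (metis of_nat_le_iff of_nat_numeral of_nat_power)
    hence "ln (real N) \<le> ln (2 ^ n)" using Npos by simp
    also have "\<dots> = real n * ln 2" by (simp add: ln_realpow)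
    also have "\<dots> \<le> real n" using ln_2_less_1 by (intro mult_right_le_one_le) auto
    finally have "ln (real N) + 1 \<le> real n + 1" by simp
    moreover have "0 < ln (real N) + 1"
    proof -
      have "0 \<le> ln (real N)" using N1 by simp
      thus ?thesis by linarith
    qed
    ultimately show ?thesis by simp
  qed
  finally show "ln (real (covering_number n \<Omega> \<alpha>)) \<le> ln (real (n choose kk n \<Omega>)) - ln (real (Vn n (kk n \<Omega>) \<alpha>)) + ln (real n + 1)"
    unfolding N_def V_def K_def c_def by simp
qed



locale omloc =
  fixes \<Omega> :: real
  assumes o: "0 < \<Omega>" "\<Omega> \<le> 1/2"
begin

lemma k_dev: "\<bar>real (kk n \<Omega>) - \<Omega> * real n\<bar> \<le> 1"
proof -
  have "0 \<le> \<Omega> * real n" using o by simp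
  hence "real (kk n \<Omega>) = real_of_int \<lfloor>\<Omega> * real n\<rfloor>" unfolding kk_def by simp
  thus ?thesis by linarith
qed

lemma k_le: "real (kk n \<Omega>) \<le> \<Omega> * real n"
proof -
  have "0 \<le> \<Omega> * real n" using o by simp
  hence "real (kk n \<Omega>) = real_of_int \<lfloor>\<Omega> * real n\<rfloor>" unfolding kk_def by simp
  thus ?thesis by linarith
qed

lemma k_lim: "(\<lambda>n. real (kk n \<Omega>) / real n) \<longlonglongrightarrow> \<Omega>"
  by (rule lim_div_n[of _ _ 1]) (use k_dev in auto)

lemma k_pos: "eventually (\<lambda>n. 0 < kk n \<Omega>) sequentially"
proof -
  have "eventually (\<lambda>n. \<Omega> / 2 < real (kk n \<Omega>) / real n) sequentially"
    using order_tendstoD(1)[OF k_lim, of "\<Omega> / 2"] o by simp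
  thus ?thesis
  proof (rule eventually_mono)
    fix n assume "\<Omega> / 2 < real (kk n \<Omega>) / real n"
    hence "0 < real (kk n \<Omega>) / real n" using o by linarith
    thus "0 < kk n \<Omega>" by (simp add: zero_less_divide_iff)
  qed
qed

lemma n_lim: "(\<lambda>n. real n / real n) \<longlonglongrightarrow> 1"
  by (rule lim_div_n[of _ _ 0]) auto

lemma nk_lim: "(\<lambda>n. real (n - kk n \<Omega>) / real n) \<longlonglongrightarrow> 1 - \<Omega>"
proof (rule lim_div_n[of _ _ 1], rule always_eventually, rule allI)
  fix n
  have "kk n \<Omega> \<le> n" by (rule kk_le[OF o])
  hence "real (n - kk n \<Omega>) = real n - real (kk n \<Omega>)" by (simp add: of_nat_diff)
  thus "\<bar>real (n - kk n \<Omega>) - (1 - \<Omega>) * real n\<bar> \<le> 1" using k_dev[of n] by (simp add: algebra_simps)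
qed

definition D :: "real \<Rightarrow> nat \<Rightarrow> real" where
  "D \<alpha> n = (ln (real (n choose kk n \<Omega>)) - ln (real (Vn n (kk n \<Omega>) \<alpha>))) / real n"

lemma H_sym: "bin_entropy (1 - p) = bin_entropy p"
  unfolding bin_entropy_def by (simp add: algebra_simps)

lemma D_main:
  assumes a: "0 \<le> \<alpha>" "\<alpha> < 1 - \<Omega>"
  shows "D \<alpha> \<longlonglongrightarrow> rate \<Omega> \<alpha>"
proof -
  define k where "k n = kk n \<Omega>" for n
  define m where "m n = k n - j0 (k n) \<alpha>" for n
  have kn: "k n \<le> n" for n unfolding k_def by (rule kk_le[OF o])
  have kr: "real (k n) \<le> (1 - \<alpha>) * real n" for n
  proof -
    have "real (k n) \<le> \<Omega> * real n" using k_le unfolding k_def .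
    moreover have "\<Omega> * real n \<le> (1 - \<alpha>) * real n" using a by (intro mult_right_mono) auto
    ultimately show ?thesis by linarith
  qed
  have j0k: "j0 (k n) \<alpha> \<le> k n" for n by (rule j0_le[OF a(1)])
  have j0b: "(1 - \<alpha>) * real (k n) \<le> real (j0 (k n) \<alpha>)" "real (j0 (k n) \<alpha>) < (1 - \<alpha>) * real (k n) + 1" for n
  proof -
    have "0 \<le> (1 - \<alpha>) * real (k n)" using a o by simp
    thus "(1 - \<alpha>) * real (k n) \<le> real (j0 (k n) \<alpha>)" "real (j0 (k n) \<alpha>) < (1 - \<alpha>) * real (k n) + 1"
      unfolding j0_def by linarith+
  qed
  have mr: "real (m n) = real (k n) - real (j0 (k n) \<alpha>)" for n
    unfolding m_def using j0k[of n] by (simp add: of_nat_diff)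
  have mdev: "\<bar>real (m n) - \<alpha> * \<Omega> * real n\<bar> \<le> 2" for n
  proof -
    have "\<bar>real (k n) - \<Omega> * real n\<bar> \<le> 1" using k_dev unfolding k_def .
    hence h1: "\<alpha> * \<bar>real (k n) - \<Omega> * real n\<bar> \<le> \<alpha> * 1" by (rule mult_left_mono) (use a in simp)
    have "\<alpha> * real (k n) - \<alpha> * \<Omega> * real n = \<alpha> * (real (k n) - \<Omega> * real n)"
      by (simp add: algebra_simps)
    hence "\<bar>\<alpha> * real (k n) - \<alpha> * \<Omega> * real n\<bar> = \<alpha> * \<bar>real (k n) - \<Omega> * real n\<bar>"
      using a by (simp add: abs_mult)
    hence "\<bar>\<alpha> * real (k n) - \<alpha> * \<Omega> * real n\<bar> \<le> \<alpha> * 1" using h1 by simp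
    hence "\<bar>\<alpha> * real (k n) - \<alpha> * \<Omega> * real n\<bar> \<le> 1" using a o by linarith
    moreover have "\<bar>real (m n) - \<alpha> * real (k n)\<bar> \<le> 1" using j0b[of n] mr[of n] by (simp add: algebra_simps)
    ultimately show ?thesis by linarith
  qed
  have m_lim: "(\<lambda>n. real (m n) / real n) \<longlonglongrightarrow> \<alpha> * \<Omega>"
    by (rule lim_div_n[of _ _ 2]) (use mdev in auto)
  have mk: "m n \<le> k n" for n unfolding m_def by simp
  have mnk: "m n \<le> n - k n" for n
  proof -
    have "real (m n) \<le> \<alpha> * real (k n)" using j0b[of n] mr[of n] by (simp add: algebra_simps)
    also have "\<dots> \<le> \<alpha> * real n" using kn[of n] a by (intro mult_left_mono) auto
    also have "\<dots> \<le> real n - real (k n)" using kr[of n] by (simp add: algebra_simps)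
    finally show ?thesis using kn[of n] by (simp add: of_nat_diff)
  qed
  have L1: "(\<lambda>n. ln (real (n choose k n)) / real n) \<longlonglongrightarrow> 1 * bin_entropy (\<Omega> / 1)"
    using binom_lim[of "\<lambda>n. n" 1 "k" \<Omega>] n_lim k_lim o kn unfolding k_def by simp
  have L2: "(\<lambda>n. ln (real (k n choose m n)) / real n) \<longlonglongrightarrow> \<Omega> * bin_entropy ((\<alpha> * \<Omega>) / \<Omega>)"
    by (rule binom_lim) (use k_lim m_lim o a mk kn in \<open>auto simp: k_def intro: mult_left_le_one_le\<close>)
  have L3: "(\<lambda>n. ln (real ((n - k n) choose m n)) / real n) \<longlonglongrightarrow> (1 - \<Omega>) * bin_entropy ((\<alpha> * \<Omega>) / (1 - \<Omega>))"
  proof (rule binom_lim)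
    show "(\<lambda>n. real (n - k n) / real n) \<longlonglongrightarrow> 1 - \<Omega>" using nk_lim unfolding k_def .
    have "\<alpha> * \<Omega> \<le> \<Omega>" using a o by (simp add: mult_left_le_one_le)
    thus "\<alpha> * \<Omega> \<le> 1 - \<Omega>" using o by linarith
  qed (use m_lim o a mnk in auto)
  have e\<alpha>: "(\<alpha> * \<Omega>) / \<Omega> = \<alpha>" using o by simp
  have rate_eq: "rate \<Omega> \<alpha> = bin_entropy \<Omega> - \<Omega> * bin_entropy \<alpha> - (1 - \<Omega>) * bin_entropy ((\<alpha> * \<Omega>) / (1 - \<Omega>))"
    using a unfolding rate_def by (simp add: mult.commute)
  define U where "U n = (ln (real (n choose k n)) - ln (real (k n choose m n)) - ln (real ((n - k n) choose m n))) / real n" for n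
  have U_lim: "U \<longlonglongrightarrow> rate \<Omega> \<alpha>"
  proof -
    have "(\<lambda>n. ln (real (n choose k n)) / real n - ln (real (k n choose m n)) / real n - ln (real ((n - k n) choose m n)) / real n)
      \<longlonglongrightarrow> 1 * bin_entropy (\<Omega> / 1) - \<Omega> * bin_entropy ((\<alpha> * \<Omega>) / \<Omega>) - (1 - \<Omega>) * bin_entropy ((\<alpha> * \<Omega>) / (1 - \<Omega>))"
      by (intro tendsto_diff L1 L2 L3)
    thus ?thesis unfolding U_def rate_eq e\<alpha> by (simp add: diff_divide_distrib)
  qed
  have U2_lim: "(\<lambda>n. U n - ln (real n + 1) / real n) \<longlonglongrightarrow> rate \<Omega> \<alpha>"
    using tendsto_diff[OF U_lim ln_Suc_over_n] by simp
  have TTeq: "TT n (k n) (j0 (k n) \<alpha>) = (k n choose m n) * ((n - k n) choose m n)" for n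
    unfolding TT_def m_def using binomial_symmetric[OF j0k[of n]] by simp
  have bnd: "U n - ln (real n + 1) / real n \<le> D \<alpha> n \<and> D \<alpha> n \<le> U n" if n: "0 < n" for n
  proof -
    define T where "T = TT n (k n) (j0 (k n) \<alpha>)"
    define V where "V = Vn n (k n) \<alpha>"
    have b1: "T \<le> V" "V \<le> (k n + 1) * T" unfolding T_def V_def using Vn_bounds[OF kr a(1)] by auto
    have V1: "1 \<le> V" unfolding V_def by (rule Vn_pos[OF a(1) kn])
    have Tpos: "0 < T"
    proof (rule ccontr)
      assume "\<not> 0 < T"
      hence "T = 0" by simp
      thus False using b1 V1 by simp
    qed
    have lT: "ln (real T) = ln (real (k n choose m n)) + ln (real ((n - k n) choose m n))"
      unfolding T_def TTeq using Tpos unfolding T_def TTeq by (simp add: ln_mult)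
    have "ln (real T) \<le> ln (real V)" using b1 Tpos by (subst ln_le_cancel_iff) auto
    moreover have "ln (real V) \<le> ln (real n + 1) + ln (real T)"
    proof -
      have "real V \<le> (real n + 1) * real T"
      proof -
        have "real V \<le> (real (k n) + 1) * real T" using b1 by (metis of_nat_Suc of_nat_le_iff of_nat_mult Suc_eq_plus1 add.commute)
        also have "\<dots> \<le> (real n + 1) * real T" using kn[of n] by (intro mult_right_mono) auto
        finally show ?thesis .
      qed
      hence "ln (real V) \<le> ln ((real n + 1) * real T)" using V1 by (subst ln_le_cancel_iff) auto
      thus ?thesis using Tpos by (simp add: ln_mult)
    qed
    ultimately show ?thesis using n unfolding D_def U_def V_def lT k_def
      by (simp add: divide_right_mono diff_divide_distrib[symmetric] add_divide_distrib[symmetric])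
  qed
  have e1: "eventually (\<lambda>n. U n - ln (real n + 1) / real n \<le> D \<alpha> n) sequentially"
    using eventually_ge_at_top[of "1::nat"] by eventually_elim (use bnd in auto)
  have e2: "eventually (\<lambda>n. D \<alpha> n \<le> U n) sequentially"
    using eventually_ge_at_top[of "1::nat"] by eventually_elim (use bnd in auto)
  show ?thesis by (rule tendsto_sandwich[OF e1 e2 U2_lim U_lim])
qed

end


context omloc
begin

lemma D_nonneg: "0 \<le> \<alpha> \<Longrightarrow> 0 \<le> D \<alpha> n"
proof -
  assume a: "0 \<le> \<alpha>"
  have kn: "kk n \<Omega> \<le> n" by (rule kk_le[OF o])
  have V1: "1 \<le> Vn n (kk n \<Omega>) \<alpha>" by (rule Vn_pos[OF a kn])
  have "Vn n (kk n \<Omega>) \<alpha> \<le> n choose kk n \<Omega>" by (rule Vn_le_binom[OF kn])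
  hence "ln (real (Vn n (kk n \<Omega>) \<alpha>)) \<le> ln (real (n choose kk n \<Omega>))" using V1 kn by (subst ln_le_cancel_iff) auto
  thus ?thesis unfolding D_def by simp
qed

lemma D_mono: "0 \<le> \<alpha>' \<Longrightarrow> \<alpha>' \<le> \<alpha> \<Longrightarrow> D \<alpha> n \<le> D \<alpha>' n"
proof -
  assume a: "0 \<le> \<alpha>'" "\<alpha>' \<le> \<alpha>"
  have kn: "kk n \<Omega> \<le> n" by (rule kk_le[OF o])
  have V1: "1 \<le> Vn n (kk n \<Omega>) \<alpha>'" by (rule Vn_pos[OF a(1) kn])
  have "Vn n (kk n \<Omega>) \<alpha>' \<le> Vn n (kk n \<Omega>) \<alpha>" by (rule Vn_mono[OF a(2)])
  hence "ln (real (Vn n (kk n \<Omega>) \<alpha>')) \<le> ln (real (Vn n (kk n \<Omega>) \<alpha>))" using V1 by (subst ln_le_cancel_iff) auto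
  thus ?thesis unfolding D_def by (simp add: divide_right_mono)
qed

lemma small_rate:
  assumes e: "0 < e"
  shows "\<exists>a'. 0 \<le> a' \<and> a' < 1 - \<Omega> \<and> rate \<Omega> a' < e"
proof -
  define g where "g a = bin_entropy \<Omega> - \<Omega> * bin_entropy a - (1 - \<Omega>) * bin_entropy (\<Omega> * a / (1 - \<Omega>))" for a
  define s where "s i = (1 - \<Omega>) - (1 - \<Omega>) / 2 * inverse (real (Suc i))" for i :: nat
  have il: "(\<lambda>i. inverse (real (Suc i))) \<longlonglongrightarrow> 0"
    using LIMSEQ_inverse_real_of_nat_add[of 0] by simp
  have s_lim: "s \<longlonglongrightarrow> 1 - \<Omega>"
  proof -
    have "(\<lambda>i. (1 - \<Omega>) / 2 * inverse (real (Suc i))) \<longlonglongrightarrow> (1 - \<Omega>) / 2 * 0"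
      by (rule tendsto_mult[OF tendsto_const il])
    from tendsto_diff[OF tendsto_const this] show ?thesis unfolding s_def by simp
  qed
  have sb: "0 \<le> s i \<and> s i < 1 - \<Omega>" for i
  proof -
    have i1: "inverse (real (Suc i)) \<le> 1" "0 < inverse (real (Suc i))" by (auto simp: inverse_le_1_iff)
    have "(1 - \<Omega>) / 2 * inverse (real (Suc i)) \<le> (1 - \<Omega>) / 2 * 1" using o i1 by (intro mult_left_mono) auto
    moreover have "0 < (1 - \<Omega>) / 2 * inverse (real (Suc i))" using o i1 by simp
    ultimately show ?thesis unfolding s_def by simp
  qed
  have s01: "s i \<in> {0..1}" for i using sb[of i] o by simp
  have t1: "(\<lambda>i. bin_entropy (s i)) \<longlonglongrightarrow> bin_entropy (1 - \<Omega>)"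
    by (rule H_tendsto[OF s_lim]) (use o s01 in auto)
  have s2_lim: "(\<lambda>i. \<Omega> * s i / (1 - \<Omega>)) \<longlonglongrightarrow> \<Omega> * (1 - \<Omega>) / (1 - \<Omega>)"
    by (intro tendsto_intros s_lim) (use o in auto)
  have s2b: "\<Omega> * s i / (1 - \<Omega>) \<in> {0..1}" for i
  proof -
    have "\<Omega> * s i \<le> \<Omega> * (1 - \<Omega>)" using sb[of i] o by (intro mult_left_mono) auto
    also have "\<dots> \<le> 1 - \<Omega>" using o by (simp add: mult_left_le_one_le)
    finally show ?thesis using sb[of i] o by (simp add: divide_le_eq_1)
  qed
  have t2: "(\<lambda>i. bin_entropy (\<Omega> * s i / (1 - \<Omega>))) \<longlonglongrightarrow> bin_entropy \<Omega>"
    using H_tendsto[OF s2_lim] o s2b by simp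
  have "(\<lambda>i. g (s i)) \<longlonglongrightarrow> bin_entropy \<Omega> - \<Omega> * bin_entropy (1 - \<Omega>) - (1 - \<Omega>) * bin_entropy \<Omega>"
    unfolding g_def by (intro tendsto_diff tendsto_mult tendsto_const t1 t2)
  moreover have "bin_entropy \<Omega> - \<Omega> * bin_entropy (1 - \<Omega>) - (1 - \<Omega>) * bin_entropy \<Omega> = 0"
    by (simp add: H_sym algebra_simps)
  ultimately have "(\<lambda>i. g (s i)) \<longlonglongrightarrow> 0" by simp
  hence "eventually (\<lambda>i. g (s i) < e) sequentially" using order_tendstoD(2) e by blast
  then obtain N where N: "\<forall>i\<ge>N. g (s i) < e" unfolding eventually_sequentially by blast
  have "g (s N) < e" using N by simp
  moreover have "rate \<Omega> (s N) = g (s N)" unfolding rate_def g_def using sb[of N] by simp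
  ultimately show ?thesis using sb[of N] by (intro exI[of _ "s N"]) auto
qed

lemma D_big:
  assumes a: "1 - \<Omega> \<le> \<alpha>"
  shows "D \<alpha> \<longlonglongrightarrow> 0"
proof (rule order_tendstoI)
  have a0: "0 \<le> \<alpha>" using a o by simp
  fix y :: real assume "y < 0"
  hence "\<forall>n. y < D \<alpha> n" using D_nonneg[OF a0] by (metis less_le_trans)
  thus "eventually (\<lambda>n. y < D \<alpha> n) sequentially" by (rule always_eventually)
next
  fix y :: real assume y: "0 < y"
  obtain a' where a': "0 \<le> a'" "a' < 1 - \<Omega>" "rate \<Omega> a' < y" using small_rate[OF y] by blast
  have "D a' \<longlonglongrightarrow> rate \<Omega> a'" by (rule D_main[OF a'(1,2)])
  hence "eventually (\<lambda>n. D a' n < y) sequentially" using order_tendstoD(2) a'(3) by blast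
  thus "eventually (\<lambda>n. D \<alpha> n < y) sequentially"
  proof (rule eventually_mono)
    fix n assume "D a' n < y"
    moreover have "D \<alpha> n \<le> D a' n" by (rule D_mono) (use a' a in auto)
    ultimately show "D \<alpha> n < y" by linarith
  qed
qed

lemma D_lim: "0 \<le> \<alpha> \<Longrightarrow> D \<alpha> \<longlonglongrightarrow> rate \<Omega> \<alpha>"
proof -
  assume a: "0 \<le> \<alpha>"
  show ?thesis
  proof (cases "\<alpha> < 1 - \<Omega>")
    case True thus ?thesis using D_main a by blast
  next
    case False
    hence "rate \<Omega> \<alpha> = 0" unfolding rate_def by simp
    thus ?thesis using D_big False by simp
  qed
qed

end

theorem lemma1:
  fixes \<Omega> \<alpha> :: real
  assumes "0 < \<Omega>" and "\<Omega> \<le> 1/2" and "0 \<le> \<alpha>" and "\<alpha> \<le> 1"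
  shows "(\<lambda>n. ln (real (covering_number n \<Omega> \<alpha>)) / real n) \<longlonglongrightarrow> rate \<Omega> \<alpha>"
proof -
  interpret omloc \<Omega> using assms by unfold_locales auto
  have Dl: "D \<alpha> \<longlonglongrightarrow> rate \<Omega> \<alpha>" by (rule D_lim[OF assms(3)])
  have Ul: "(\<lambda>n. D \<alpha> n + ln (real n + 1) / real n) \<longlonglongrightarrow> rate \<Omega> \<alpha>"
    using tendsto_add[OF Dl ln_Suc_over_n] by simp
  have ev: "eventually (\<lambda>n. D \<alpha> n \<le> ln (real (covering_number n \<Omega> \<alpha>)) / real n
      \<and> ln (real (covering_number n \<Omega> \<alpha>)) / real n \<le> D \<alpha> n + ln (real n + 1) / real n) sequentially"
    using k_pos eventually_ge_at_top[of "1::nat"]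
  proof eventually_elim
    case (elim n)
    hence n: "0 < real n" by simp
    note b = cov_bounds[OF assms(1,2,3) elim(1)]
    show ?case using b n unfolding D_def
      by (simp add: divide_right_mono add_divide_distrib[symmetric])
  qed
  have e1: "eventually (\<lambda>n. D \<alpha> n \<le> ln (real (covering_number n \<Omega> \<alpha>)) / real n) sequentially"
    by (rule eventually_mono[OF ev]) simp
  have e2: "eventually (\<lambda>n. ln (real (covering_number n \<Omega> \<alpha>)) / real n \<le> D \<alpha> n + ln (real n + 1) / real n) sequentially"
    by (rule eventually_mono[OF ev]) simp
  show ?thesis by (rule tendsto_sandwich[OF e1 e2 Dl Ul])
qed


end
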